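(* Let $P$ be an infinite field and $W=W(X)$ the free commutative or free associative (unital) algebra over $P$ on a finite set $X=\{x_1,\ldots,x_n\}$. Let $\mu:W\to W$ be a bijection such that $s\mapsto\mu s\mu^{-1}$ is an automorphism of the semigroup $\mathrm{End}(W)$, and suppose $\mu(0)=0$, $\mu(1)=1$ and $\mu(x_i)=x_i$ for all $i$. Then for all $u,v\in W$, $$\mu(u+v)=\mu(u)+\mu(v).$$
   Context: $\mathrm{End}(W)$ is the semigroup of all $P$-algebra endomorphisms of $W$. *)

theory Defs
  imports Main "HOL-Library.Poly_Mapping" "HOL-Library.Multiset"
begin

text \<open>With M = finite multisets over X
  (op = +, e = empty) this is the free commutative unital algebra P[X]; with
  M = words (lists) over X (op = append, e = Nil) it is the free associative
  unital algebra P<X>.\<close>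

definition malg_mult :: "('m \<Rightarrow> 'm \<Rightarrow> 'm) \<Rightarrow> ('m \<Rightarrow>\<^sub>0 'a::comm_ring_1) \<Rightarrow> ('m \<Rightarrow>\<^sub>0 'a) \<Rightarrow> ('m \<Rightarrow>\<^sub>0 'a)" where
  "malg_mult op p q =
     (\<Sum>m\<in>Poly_Mapping.keys p. \<Sum>m'\<in>Poly_Mapping.keys q. Poly_Mapping.single (op m m') (Poly_Mapping.lookup p m * Poly_Mapping.lookup q m'))"

definition malg_one :: "'m \<Rightarrow> ('m \<Rightarrow>\<^sub>0 'a::comm_ring_1)" where
  "malg_one e = Poly_Mapping.single e 1"

definition malg_smult :: "'a::comm_ring_1 \<Rightarrow> ('m \<Rightarrow>\<^sub>0 'a) \<Rightarrow> ('m \<Rightarrow>\<^sub>0 'a)" where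
  "malg_smult c p = Poly_Mapping.map (\<lambda>a. c * a) p"

definition malg_gen :: "('x \<Rightarrow> 'm) \<Rightarrow> 'x \<Rightarrow> ('m \<Rightarrow>\<^sub>0 'a::comm_ring_1)" where
  "malg_gen letter x = Poly_Mapping.single (letter x) 1"

definition malg_End :: "('m \<Rightarrow> 'm \<Rightarrow> 'm) \<Rightarrow> 'm \<Rightarrow> (('m \<Rightarrow>\<^sub>0 'a::comm_ring_1) \<Rightarrow> ('m \<Rightarrow>\<^sub>0 'a)) set" where
  "malg_End op e = {s.
      (\<forall>p q. s (p + q) = s p + s q) \<and>
      (\<forall>c p. s (malg_smult c p) = malg_smult c (s p)) \<and>
      (\<forall>p q. s (malg_mult op p q) = malg_mult op (s p) (s q)) \<and>
      s (malg_one e) = malg_one e}"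

end

theory Submission imports Defs "HOL-Computational_Algebra.Polynomial"
begin

abbreviation cst :: "'a \<Rightarrow> ('m::monoid_add \<Rightarrow>\<^sub>0 'a::comm_ring_1)" where
  "cst c \<equiv> Poly_Mapping.single 0 c"

definition EndW :: "(('m::monoid_add \<Rightarrow>\<^sub>0 'a::comm_ring_1) \<Rightarrow> ('m \<Rightarrow>\<^sub>0 'a)) set" where
  "EndW = {s. (\<forall>p q. s (p + q) = s p + s q) \<and>
      (\<forall>c p. s (cst c * p) = cst c * s p) \<and>
      (\<forall>p q. s (p * q) = s p * s q) \<and> s 1 = 1}"

lemma pm_expand: "p = (\<Sum>m\<in>Poly_Mapping.keys p. Poly_Mapping.single m (Poly_Mapping.lookup p m))"
proof (rule poly_mapping_eqI)
  fix k
  show "Poly_Mapping.lookup p k = Poly_Mapping.lookup (\<Sum>m\<in>Poly_Mapping.keys p. Poly_Mapping.single m (Poly_Mapping.lookup p m)) k"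
    by (simp add: lookup_sum lookup_single when_def in_keys_iff)
qed

lemma malg_mult_eq: "malg_mult (+) p q = p * (q :: 'm::monoid_add \<Rightarrow>\<^sub>0 'a::comm_ring_1)"
proof -
  have "p * q = (\<Sum>m\<in>Poly_Mapping.keys p. Poly_Mapping.single m (Poly_Mapping.lookup p m)) *
     (\<Sum>m\<in>Poly_Mapping.keys q. Poly_Mapping.single m (Poly_Mapping.lookup q m))"
    using pm_expand[of p] pm_expand[of q] by simp
  also have "\<dots> = malg_mult (+) p q"
    by (simp add: malg_mult_def sum_distrib_left sum_distrib_right mult_single sum.swap[of _ "Poly_Mapping.keys q"])
  finally show ?thesis by simp
qed

lemma malg_smult_eq: "malg_smult c p = cst c * (p :: 'm::monoid_add \<Rightarrow>\<^sub>0 'a::comm_ring_1)"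
  by (simp add: malg_smult_def mult_map_scale_conv_mult)

lemma malg_End_eq: "malg_End (+) (0::'m::monoid_add) = (EndW :: (('m \<Rightarrow>\<^sub>0 'a::comm_ring_1) \<Rightarrow> _) set)"
  by (simp add: malg_End_def EndW_def malg_mult_eq malg_smult_eq malg_one_def)

lemma cst_central: "cst c * p = p * (cst c :: 'm::monoid_add \<Rightarrow>\<^sub>0 'a::comm_ring_1)"
proof -
  have "cst c * p = cst c * (\<Sum>m\<in>Poly_Mapping.keys p. Poly_Mapping.single m (Poly_Mapping.lookup p m))"
    using pm_expand[of p] by simp
  also have "\<dots> = (\<Sum>m\<in>Poly_Mapping.keys p. Poly_Mapping.single m (Poly_Mapping.lookup p m)) * cst c"
    by (simp add: sum_distrib_left sum_distrib_right mult_single mult.commute)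
  finally show ?thesis using pm_expand[of p] by simp
qed

lemma cst_mult: "cst a * cst b = (cst (a * b) :: 'm::monoid_add \<Rightarrow>\<^sub>0 'a::comm_ring_1)"
  by (simp add: mult_single)

lemma cst_add: "cst a + cst b = (cst (a + b) :: 'm::monoid_add \<Rightarrow>\<^sub>0 'a::comm_ring_1)"
  by (simp add: single_add)

lemma cst_mult_swap: "(cst a * X) * (cst b * Y) = cst (a*b) * (X * (Y :: 'm::monoid_add \<Rightarrow>\<^sub>0 'a::comm_ring_1))"
proof -
  have "(cst a * X) * (cst b * Y) = cst a * (X * cst b) * Y" by (simp only: mult.assoc)
  also have "\<dots> = cst a * (cst b * X) * Y" by (simp only: cst_central)
  also have "\<dots> = (cst a * cst b) * (X * Y)" by (simp only: mult.assoc)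
  finally show ?thesis by (simp only: cst_mult)
qed

context
  fixes s :: "('m::monoid_add \<Rightarrow>\<^sub>0 'a::comm_ring_1) \<Rightarrow> ('m \<Rightarrow>\<^sub>0 'a)"
  assumes s: "s \<in> EndW"
begin

lemma E_add: "s (p + q) = s p + s q" using s unfolding EndW_def by blast
lemma E_cst_mult: "s (cst c * p) = cst c * s p" using s unfolding EndW_def by blast
lemma E_mult: "s (p * q) = s p * s q" using s unfolding EndW_def by blast
lemma E_one: "s 1 = 1" using s unfolding EndW_def by blast
lemma E_zero: "s 0 = 0" using E_add[of 0 0] by simp
lemma E_cst: "s (cst c) = cst c" using E_cst_mult[of c 1] by (simp add: E_one)
lemma E_sum: "s (sum f A) = (\<Sum>a\<in>A. s (f a))"
  by (induction A rule: infinite_finite_induct) (simp_all add: E_zero E_add)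
lemma E_prod_list: "s (prod_list xs) = prod_list (map s xs)"
  by (induction xs) (simp_all add: E_one E_mult)
lemma E_power: "s (p ^ k) = s p ^ k"
  by (induction k) (simp_all add: E_one E_mult)
lemma E_single: "s (Poly_Mapping.single m a) = cst a * s (Poly_Mapping.single m 1)"
  using E_cst_mult[of a "Poly_Mapping.single m 1"] by (simp add: mult_single)
end

locale fa =
  fixes letter :: "'x \<Rightarrow> 'm::monoid_add"
  assumes word_ex: "\<And>m. \<exists>ws. m = sum_list (map letter ws)"
    and rep_inj: "\<And>x k j. sum_list (replicate k (letter x)) = sum_list (replicate j (letter x)) \<Longrightarrow> k = j"
    and letter_inj: "inj letter"
begin

definition word :: "'m \<Rightarrow> 'x list" where
  "word m = (SOME ws. m = sum_list (map letter ws))"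

lemma word: "sum_list (map letter (word m)) = m"
  unfolding word_def by (metis (mono_tags, lifting) someI_ex word_ex)

definition gen :: "'x \<Rightarrow> ('m \<Rightarrow>\<^sub>0 'a::comm_ring_1)" where
  "gen x = Poly_Mapping.single (letter x) 1"

lemma prod_gen: "prod_list (map gen ws) = (Poly_Mapping.single (sum_list (map letter ws)) 1 :: 'm \<Rightarrow>\<^sub>0 'a::comm_ring_1)"
  by (induction ws) (simp_all add: gen_def mult_single)

lemma single_word: "Poly_Mapping.single m a = cst a * (prod_list (map gen (word m)) :: 'm \<Rightarrow>\<^sub>0 'a::comm_ring_1)"
  by (simp add: prod_gen word mult_single)

definition M :: "('x \<Rightarrow> ('m \<Rightarrow>\<^sub>0 'a::comm_ring_1)) \<Rightarrow> 'm \<Rightarrow> ('m \<Rightarrow>\<^sub>0 'a)" where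
  "M f m = prod_list (map f (word m))"

definition eval :: "('x \<Rightarrow> ('m \<Rightarrow>\<^sub>0 'a::comm_ring_1)) \<Rightarrow> ('m \<Rightarrow>\<^sub>0 'a) \<Rightarrow> ('m \<Rightarrow>\<^sub>0 'a)" where
  "eval f p = (\<Sum>m\<in>Poly_Mapping.keys p. cst (Poly_Mapping.lookup p m) * M f m)"

lemma End_rep:
  assumes s: "s \<in> EndW"
  shows "s p = eval (s \<circ> gen) p"
proof -
  have "s p = s (\<Sum>m\<in>Poly_Mapping.keys p. Poly_Mapping.single m (Poly_Mapping.lookup p m))"
    using pm_expand[of p] by simp
  also have "\<dots> = (\<Sum>m\<in>Poly_Mapping.keys p. s (Poly_Mapping.single m (Poly_Mapping.lookup p m)))"
    by (rule E_sum[OF s])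
  also have "\<dots> = eval (s \<circ> gen) p"
    unfolding eval_def M_def
  proof (intro sum.cong refl)
    fix m
    have "s (Poly_Mapping.single m (Poly_Mapping.lookup p m)) = s (cst (Poly_Mapping.lookup p m) * prod_list (map gen (word m)))"
      by (subst single_word) (rule refl)
    then show "s (Poly_Mapping.single m (Poly_Mapping.lookup p m)) = cst (Poly_Mapping.lookup p m) * prod_list (map (s \<circ> gen) (word m))"
      by (simp add: E_cst_mult[OF s] E_prod_list[OF s])
  qed
  finally show ?thesis .
qed

lemma End_unique:
  assumes "s \<in> EndW" "t \<in> EndW" "\<And>x. s (gen x) = t (gen x)"
  shows "s = t"
proof
  fix p
  have "s \<circ> gen = t \<circ> gen" using assms(3) by auto
  then show "s p = t p" using End_rep[OF assms(1)] End_rep[OF assms(2)] by metis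
qed

lemma eval_add: "eval f (p + q) = eval f p + eval f q"
  unfolding eval_def
  by (rule setsum_keys_plus_distrib) (simp_all add: distrib_right single_add)

lemma eval_zero: "eval f 0 = 0"
  by (simp add: eval_def)

lemma eval_sum: "eval f (sum g A) = (\<Sum>a\<in>A. eval f (g a))"
  by (induction A rule: infinite_finite_induct) (simp_all add: eval_zero eval_add)

lemma eval_single: "eval f (Poly_Mapping.single m a) = cst a * M f m"
  by (simp add: eval_def)

lemma eval_mult:
  assumes hom: "\<And>m m'. M f (m + m') = M f m * M f m'"
  shows "eval f (p * q) = eval f p * eval f q"
proof -
  let ?P = "Poly_Mapping.keys p" and ?Q = "Poly_Mapping.keys q"
  let ?p = "Poly_Mapping.lookup p" and ?q = "Poly_Mapping.lookup q"
  have "p * q = (\<Sum>m\<in>?P. Poly_Mapping.single m (?p m)) * (\<Sum>m\<in>?Q. Poly_Mapping.single m (?q m))"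
    using pm_expand[of p] pm_expand[of q] by simp
  also have "\<dots> = (\<Sum>m\<in>?P. \<Sum>m'\<in>?Q. Poly_Mapping.single (m + m') (?p m * ?q m'))"
    by (simp add: sum_distrib_left sum_distrib_right mult_single sum.swap[of _ ?Q])
  finally have "eval f (p * q) = (\<Sum>m\<in>?P. \<Sum>m'\<in>?Q. cst (?p m * ?q m') * M f (m + m'))"
    by (simp add: eval_sum eval_single)
  also have "\<dots> = (\<Sum>m\<in>?P. \<Sum>m'\<in>?Q. (cst (?p m) * M f m) * (cst (?q m') * M f m'))"
    apply (intro sum.cong refl)
    by (simp only: hom cst_mult_swap)
  also have "\<dots> = eval f p * eval f q"
    by (simp add: eval_def sum_distrib_left sum_distrib_right sum.swap[of _ ?Q])
  finally show ?thesis .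
qed

lemma eval_End:
  assumes hom: "\<And>m m'. M f (m + m') = M f m * M f m'" and one: "M f 0 = 1"
  shows "eval f \<in> EndW"
proof -
  have c: "eval f (cst c) = cst c" for c using one by (simp only: eval_single mult_1_right)
  have o: "eval f 1 = 1" using c[of 1] by simp
  show ?thesis unfolding EndW_def
    using eval_add eval_mult[OF hom] c o by auto
qed


definition rep :: "'x \<Rightarrow> nat \<Rightarrow> 'm" where
  "rep x k = sum_list (replicate k (letter x))"

definition phi :: "'x \<Rightarrow> 'a::comm_ring_1 poly \<Rightarrow> ('m \<Rightarrow>\<^sub>0 'a)" where
  "phi x q = (\<Sum>k\<le>degree q. Poly_Mapping.single (rep x k) (coeff q k))"

lemma phi_bound:
  assumes "degree q \<le> N"
  shows "phi x q = (\<Sum>k\<le>N. Poly_Mapping.single (rep x k) (coeff q k))"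
  unfolding phi_def
  by (rule sum.mono_neutral_left) (use assms in \<open>auto simp: coeff_eq_0\<close>)

lemma lookup_phi: "Poly_Mapping.lookup (phi x q) (rep x k) = coeff q k"
proof -
  have "phi x q = (\<Sum>j\<le>max k (degree q). Poly_Mapping.single (rep x j) (coeff q j))"
    by (rule phi_bound) simp
  then have "Poly_Mapping.lookup (phi x q) (rep x k) = (\<Sum>j\<le>max k (degree q). (coeff q j when rep x j = rep x k))"
    by (simp add: lookup_sum lookup_single)
  also have "\<dots> = (\<Sum>j\<le>max k (degree q). (if j = k then coeff q j else 0))"
    by (intro sum.cong refl) (auto simp: when_def rep_def dest: rep_inj)
  also have "\<dots> = coeff q k" by simp
  finally show ?thesis .
qed

lemma phi_inj: "phi x q = phi x r \<Longrightarrow> q = r"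
  by (metis lookup_phi poly_eqI)

lemma phi_add: "phi x (q + r) = phi x q + phi x r"
proof -
  let ?N = "max (degree q) (degree r)"
  have "phi x (q + r) = (\<Sum>k\<le>?N. Poly_Mapping.single (rep x k) (coeff (q + r) k))"
    by (rule phi_bound) (simp add: degree_add_le)
  also have "\<dots> = (\<Sum>k\<le>?N. Poly_Mapping.single (rep x k) (coeff q k)) + (\<Sum>k\<le>?N. Poly_Mapping.single (rep x k) (coeff r k))"
    by (simp add: single_add sum.distrib)
  also have "\<dots> = phi x q + phi x r"
    by (simp add: phi_bound[symmetric])
  finally show ?thesis .
qed

lemma phi_zero: "phi x 0 = 0"
  by (simp add: phi_def)

lemma phi_smult: "phi x (smult a q) = cst a * phi x q"
proof -
  have "phi x (smult a q) = (\<Sum>k\<le>degree q. Poly_Mapping.single (rep x k) (coeff (smult a q) k))"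
    by (rule phi_bound) (simp add: degree_smult_le)
  also have "\<dots> = cst a * phi x q"
    by (simp add: phi_def sum_distrib_left mult_single)
  finally show ?thesis .
qed

lemma phi_const: "phi x [:c:] = cst c"
  by (simp add: phi_def rep_def)

lemma gen_power: "(gen x :: 'm \<Rightarrow>\<^sub>0 'a::comm_ring_1) ^ k = Poly_Mapping.single (rep x k) 1"
  by (induction k) (simp_all add: rep_def gen_def mult_single)

lemma phi_pCons: "phi x (pCons a q) = cst a + gen x * phi x q"
proof -
  let ?N = "degree q"
  have "phi x (pCons a q) = (\<Sum>k\<le>Suc ?N. Poly_Mapping.single (rep x k) (coeff (pCons a q) k))"
    by (rule phi_bound) (simp add: degree_pCons_le)
  also have "\<dots> = cst a + (\<Sum>k\<le>?N. Poly_Mapping.single (rep x (Suc k)) (coeff q k))"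
    by (subst sum.atMost_Suc_shift) (simp add: rep_def)
  also have "\<dots> = cst a + gen x * phi x q"
    by (simp add: phi_def sum_distrib_left gen_def mult_single rep_def)
  finally show ?thesis .
qed

lemma phi_mult: "phi x (q * r) = phi x q * phi x r"
proof (induction q)
  case 0
  then show ?case by (simp add: phi_zero)
next
  case (pCons a q)
  have "phi x (pCons a q * r) = cst a * phi x r + gen x * phi x (q * r)"
    by (simp add: phi_add phi_smult phi_pCons[of x 0, simplified])
  also have "\<dots> = phi x (pCons a q) * phi x r"
    by (simp add: pCons.IH phi_pCons distrib_right mult.assoc)
  finally show ?case .
qed

lemma phi_X: "phi x [:0, 1:] = gen x"
  by (simp add: phi_pCons phi_const phi_zero)

lemma End_phi:
  assumes s: "s \<in> EndW" and g: "s (gen x) = phi x r"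
  shows "s (phi x q) = phi x (pcompose q r)"
proof (induction q)
  case 0
  then show ?case by (simp add: phi_zero E_zero[OF s])
next
  case (pCons a q)
  then show ?case
    by (simp add: phi_pCons E_add[OF s] E_mult[OF s] E_cst[OF s] g pcompose_pCons phi_add phi_const phi_mult phi_zero)
qed

end


lemma cst_sum: "(\<Sum>a\<in>A. cst (f a)) = (cst (\<Sum>a\<in>A. f a) :: 'm::monoid_add \<Rightarrow>\<^sub>0 'a::comm_ring_1)"
  by (induction A rule: infinite_finite_induct) (simp_all add: single_add)

lemma degree1_eq: "degree (p::'a::comm_ring_1 poly) = 1 \<Longrightarrow> p = [:coeff p 0, coeff p 1:]"
  by (rule poly_eqI) (auto simp: coeff_pCons coeff_eq_0 split: nat.splits)

locale mu = fa letter for letter :: "'x \<Rightarrow> 'm::monoid_add" +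
  fixes \<mu> :: "('m \<Rightarrow>\<^sub>0 'a::field) \<Rightarrow> ('m \<Rightarrow>\<^sub>0 'a)"
  assumes subst_ex: "\<And>f::'x \<Rightarrow> ('m \<Rightarrow>\<^sub>0 'a). \<exists>s\<in>EndW. \<forall>x. s (gen x) = f x"
    and inf: "infinite (UNIV :: 'a set)"
    and bij: "bij \<mu>"
    and conjE: "\<And>s. s \<in> EndW \<Longrightarrow> \<mu> \<circ> s \<circ> inv \<mu> \<in> EndW"
    and mu0: "\<mu> 0 = 0" and mu1: "\<mu> 1 = 1" and mugen: "\<And>x. \<mu> (gen x) = gen x"
begin

lemma inv_mu: "inv \<mu> (\<mu> p) = p"
  using bij by (simp add: bij_is_inj)

lemma mu_inj: "\<mu> p = \<mu> q \<Longrightarrow> p = q"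
  using bij by (meson bij_is_inj injD)

lemma conj_app: "(\<mu> \<circ> s \<circ> inv \<mu>) (\<mu> p) = \<mu> (s p)"
  by (simp add: inv_mu)

lemma conj_gen: "(\<mu> \<circ> s \<circ> inv \<mu>) (gen x) = \<mu> (s (gen x))"
  using inv_mu[of "gen x"] by (simp add: mugen)

lemma fix_lemma:
  assumes s: "s \<in> EndW" and g: "\<And>x. \<mu> (s (gen x)) = s (gen x)"
  shows "\<mu> (s p) = s (\<mu> p)"
proof -
  have "\<mu> \<circ> s \<circ> inv \<mu> = s"
    by (rule End_unique[OF conjE[OF s] s]) (simp only: conj_gen g)
  then show ?thesis using conj_app[of s p] by simp
qed

definition Z :: "('m \<Rightarrow>\<^sub>0 'a) \<Rightarrow> ('m \<Rightarrow>\<^sub>0 'a)" where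
  "Z = (SOME s. s \<in> EndW \<and> (\<forall>x. s (gen x) = 0))"

lemma Z: "Z \<in> EndW" "\<And>x. Z (gen x) = 0"
proof -
  have "\<exists>s::('m \<Rightarrow>\<^sub>0 'a) \<Rightarrow> _. s \<in> EndW \<and> (\<forall>x. s (gen x) = 0)" using subst_ex[of "\<lambda>_. 0"] by auto
  then have "Z \<in> EndW \<and> (\<forall>x. Z (gen x) = 0)" unfolding Z_def by (rule someI_ex)
  then show "Z \<in> EndW" "\<And>x. Z (gen x) = 0" by auto
qed

lemma Z_cst: "\<exists>c. Z p = cst c"
proof -
  have pl: "prod_list (map (\<lambda>_. 0) ws) = (cst (if ws = [] then 1 else 0) :: 'm \<Rightarrow>\<^sub>0 'a)" for ws :: "'x list"
    by (cases ws) simp_all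
  have "Z p = eval (Z \<circ> gen) p" by (rule End_rep[OF Z(1)])
  also have "\<dots> = (\<Sum>m\<in>Poly_Mapping.keys p. cst (Poly_Mapping.lookup p m) * cst (if word m = [] then 1 else 0))"
    unfolding eval_def M_def by (simp add: Z(2) comp_def pl)
  also have "\<dots> = cst (\<Sum>m\<in>Poly_Mapping.keys p. Poly_Mapping.lookup p m * (if word m = [] then 1 else 0))"
    by (simp only: cst_mult cst_sum)
  finally show ?thesis by blast
qed

lemma mu_Z: "\<mu> (Z p) = Z (\<mu> p)"
  by (rule fix_lemma[OF Z(1)]) (simp add: Z(2) mu0)

definition sig :: "'a \<Rightarrow> 'a" where
  "sig c = Poly_Mapping.lookup (\<mu> (cst c)) 0"

lemma mu_cst: "\<mu> (cst c) = cst (sig c)"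
proof -
  have "\<mu> (cst c) = Z (\<mu> (cst c))" using mu_Z[of "cst c"] E_cst[OF Z(1)] by simp
  then obtain d where "\<mu> (cst c) = cst d" using Z_cst by metis
  then show ?thesis by (simp add: sig_def)
qed

lemma sig_inj: "sig a = sig b \<Longrightarrow> a = b"
  using mu_cst mu_inj by (metis inj_single injD)

lemma sig_surj: "\<exists>c. sig c = d"
proof -
  let ?p = "inv \<mu> (cst d)"
  have mp: "\<mu> ?p = cst d" using bij by (simp add: bij_def surj_f_inv_f)
  obtain c where c: "Z ?p = cst c" using Z_cst by blast
  have "\<mu> (cst c) = cst d" using mu_Z[of ?p] c mp E_cst[OF Z(1)] by simp
  then show ?thesis using mu_cst by (metis inj_single injD)
qed

lemma sig0: "sig 0 = 0" using mu_cst[of 0] mu0 by (metis inj_single injD single_zero)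
lemma sig1: "sig 1 = 1" using mu_cst[of 1] mu1 by (metis inj_single injD single_one)

definition K :: "'x \<Rightarrow> ('m \<Rightarrow>\<^sub>0 'a) \<Rightarrow> ('m \<Rightarrow>\<^sub>0 'a)" where
  "K x0 = (SOME s. s \<in> EndW \<and> (\<forall>x. s (gen x) = (if x = x0 then gen x0 else 0)))"

lemma K: "K x0 \<in> EndW" "\<And>x. K x0 (gen x) = (if x = x0 then gen x0 else 0)"
proof -
  have "\<exists>s::('m \<Rightarrow>\<^sub>0 'a) \<Rightarrow> _. s \<in> EndW \<and> (\<forall>x. s (gen x) = (if x = x0 then gen x0 else 0))"
    using subst_ex[of "\<lambda>x. if x = x0 then gen x0 else 0"] by auto
  then have "K x0 \<in> EndW \<and> (\<forall>x. K x0 (gen x) = (if x = x0 then gen x0 else 0))"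
    unfolding K_def by (rule someI_ex)
  then show "K x0 \<in> EndW" "\<And>x. K x0 (gen x) = (if x = x0 then gen x0 else 0)" by auto
qed

lemma mu_K: "\<mu> (K x0 p) = K x0 (\<mu> p)"
  by (rule fix_lemma[OF K(1)]) (simp add: K(2) mu0 mugen)

lemma K_phi: "K x0 (phi x0 q) = phi x0 q"
  using End_phi[OF K(1), of x0 x0 "[:0,1:]" q] by (simp add: K(2) phi_X)

definition inphi :: "'x \<Rightarrow> ('m \<Rightarrow>\<^sub>0 'a) \<Rightarrow> bool" where
  "inphi x0 p \<longleftrightarrow> (\<exists>q. p = phi x0 q)"

lemma inphi_add: "inphi x0 p \<Longrightarrow> inphi x0 q \<Longrightarrow> inphi x0 (p + q)"
  unfolding inphi_def by (metis phi_add)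
lemma inphi_mult: "inphi x0 p \<Longrightarrow> inphi x0 q \<Longrightarrow> inphi x0 (p * q)"
  unfolding inphi_def by (metis phi_mult)
lemma inphi_cst: "inphi x0 (cst c)"
  unfolding inphi_def by (metis phi_const)
lemma inphi_zero: "inphi x0 0"
  using inphi_cst[of x0 0] by simp
lemma inphi_one: "inphi x0 1"
  using inphi_cst[of x0 1] by simp
lemma inphi_sum: "(\<And>a. a \<in> A \<Longrightarrow> inphi x0 (f a)) \<Longrightarrow> inphi x0 (sum f A)"
  by (induction A rule: infinite_finite_induct) (simp_all add: inphi_zero inphi_add)
lemma inphi_prod_list: "(\<And>a. a \<in> set xs \<Longrightarrow> inphi x0 a) \<Longrightarrow> inphi x0 (prod_list xs)"
  by (induction xs) (simp_all add: inphi_one inphi_mult)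

lemma inphi_K: "inphi x0 (K x0 p)"
proof -
  have "K x0 p = eval (K x0 \<circ> gen) p" by (rule End_rep[OF K(1)])
  also have "inphi x0 \<dots>"
    unfolding eval_def M_def
    apply (intro inphi_sum inphi_mult inphi_cst inphi_prod_list)
    using inphi_zero phi_X[of x0, symmetric] by (auto simp: K(2) inphi_def)
  finally show ?thesis .
qed

lemma mu_phi_ex: "\<exists>r. \<mu> (phi x0 q) = phi x0 r"
proof -
  have "\<mu> (phi x0 q) = K x0 (\<mu> (phi x0 q))" using mu_K[of x0 "phi x0 q"] K_phi by simp
  then show ?thesis using inphi_K unfolding inphi_def by metis
qed

definition psi :: "'x \<Rightarrow> 'a poly \<Rightarrow> 'a poly" where
  "psi x0 q = (SOME r. \<mu> (phi x0 q) = phi x0 r)"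

lemma mu_phi: "\<mu> (phi x0 q) = phi x0 (psi x0 q)"
  unfolding psi_def using mu_phi_ex by (rule someI_ex)

lemma psi_comp: "psi x0 (pcompose q r) = pcompose (psi x0 q) (psi x0 r)"
proof -
  obtain s where s: "s \<in> EndW" "\<And>x. s (gen x) = phi x0 r" using subst_ex[of "\<lambda>_. phi x0 r"] by blast
  let ?c = "\<mu> \<circ> s \<circ> inv \<mu>"
  have c: "?c \<in> EndW" by (rule conjE[OF s(1)])
  have cg: "?c (gen x0) = phi x0 (psi x0 r)" by (simp only: conj_gen s(2) mu_phi)
  have "phi x0 (psi x0 (pcompose q r)) = \<mu> (s (phi x0 q))"
    by (simp add: mu_phi End_phi[OF s(1) s(2)])
  also have "\<dots> = ?c (phi x0 (psi x0 q))" by (simp only: conj_app[symmetric] mu_phi)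
  also have "\<dots> = phi x0 (pcompose (psi x0 q) (psi x0 r))" by (rule End_phi[OF c cg])
  finally show ?thesis by (rule phi_inj)
qed

lemma psi_X: "psi x0 [:0,1:] = [:0,1:]"
  using mu_phi[of x0 "[:0,1:]"] by (intro phi_inj[of x0]) (simp add: phi_X mugen)

lemma psi_const: "psi x0 [:c:] = [:sig c:]"
  using mu_phi[of x0 "[:c:]"] by (intro phi_inj[of x0]) (simp add: phi_const mu_cst)

lemma psi_zero: "psi x0 0 = 0"
  using psi_const[of x0 0] by (simp add: sig0)

lemma psi_eval: "sig (poly q a) = poly (psi x0 q) (sig a)"
  using psi_comp[of x0 q "[:a:]"] by (simp add: pcompose_pCons_0 psi_const)

lemma psi_lin: "psi x0 [:0,c:] = [:0, sig c:]"
proof (cases "c = 0")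
  case True
  then show ?thesis using psi_zero sig0 by simp
next
  case False
  have "pcompose [:0,c:] [:0, inverse c:] = [:0,1:]"
    using False by (simp add: pcompose_pCons)
  then have "pcompose (psi x0 [:0,c:]) (psi x0 [:0,inverse c:]) = [:0,1:]"
    using psi_comp psi_X by metis
  then have "degree (psi x0 [:0,c:]) * degree (psi x0 [:0,inverse c:]) = 1"
    using degree_pcompose[of "psi x0 [:0,c:]" "psi x0 [:0,inverse c:]"] by simp
  then have d: "degree (psi x0 [:0,c:]) = 1" by simp
  let ?q = "psi x0 [:0,c:]"
  have e: "?q = [:coeff ?q 0, coeff ?q 1:]" by (rule degree1_eq[OF d])
  have "poly ?q (sig 0) = sig 0" using psi_eval[of "[:0,c:]" 0 x0] by simp
  then have c0: "coeff ?q 0 = 0" using sig0 by (simp add: poly_0_coeff_0)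
  have "poly ?q (sig 1) = sig c" using psi_eval[of "[:0,c:]" 1 x0] by simp
  moreover have "poly ?q 1 = coeff ?q 0 + coeff ?q 1" by (subst e) simp
  ultimately have c1: "coeff ?q 1 = sig c" using sig1 c0 by simp
  show ?thesis using e c0 c1 by simp
qed

lemma phi_lin: "phi x0 [:0,c:] = cst c * gen x0"
  by (simp add: phi_pCons phi_const phi_zero cst_central[of c "gen x0"])

lemma mu_smult: "\<mu> (cst c * p) = cst (sig c) * \<mu> p"
proof -
  obtain s where s: "s \<in> EndW" "\<And>x. s (gen x) = p" using subst_ex[of "\<lambda>_. p"] by blast
  let ?c = "\<mu> \<circ> s \<circ> inv \<mu>"
  have c: "?c \<in> EndW" by (rule conjE[OF s(1)])
  define x0 :: 'x where "x0 = undefined"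
  have "\<mu> (cst c * p) = \<mu> (s (phi x0 [:0,c:]))"
    by (simp add: phi_lin E_cst_mult[OF s(1)] s(2))
  also have "\<dots> = ?c (phi x0 [:0, sig c:])" by (simp only: conj_app[symmetric] mu_phi psi_lin)
  also have "\<dots> = cst (sig c) * \<mu> p"
    by (simp only: phi_lin E_cst_mult[OF c] conj_gen s(2))
  finally show ?thesis .
qed

lemma sig_mult: "sig (a * b) = sig a * sig b"
  using mu_smult[of a "cst b"] by (simp add: mu_cst cst_mult) (metis inj_single injD)


lemma lookup_cst_mult: "Poly_Mapping.lookup (cst d * p) m = d * Poly_Mapping.lookup p m"
  by (simp add: mult_map_scale_conv_mult[symmetric] map.rep_eq when_def)

lemma prod_scaled: "prod_list (map (\<lambda>y. cst d * gen y) ws) = cst (d ^ length ws) * prod_list (map gen ws)"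
  by (induction ws) (simp_all add: cst_mult_swap)

lemma D_single:
  assumes s: "s \<in> EndW" and g: "\<And>y. s (gen y) = cst d * gen y"
  shows "s (Poly_Mapping.single m a) = Poly_Mapping.single m (a * d ^ length (word m))"
proof -
  have "s (Poly_Mapping.single m a) = cst a * M (s \<circ> gen) m"
    by (simp only: End_rep[OF s] eval_single)
  also have "\<dots> = cst a * (cst (d ^ length (word m)) * Poly_Mapping.single m 1)"
    by (simp add: M_def comp_def g prod_scaled prod_gen word)
  also have "\<dots> = Poly_Mapping.single m (a * d ^ length (word m))"
    by (simp add: mult_single mult.assoc[symmetric])
  finally show ?thesis .
qed

lemma D_lookup:
  assumes s: "s \<in> EndW" and g: "\<And>y. s (gen y) = cst d * gen y"
  shows "Poly_Mapping.lookup (s w) m = d ^ length (word m) * Poly_Mapping.lookup w m"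
proof -
  have "s w = (\<Sum>m'\<in>Poly_Mapping.keys w. s (Poly_Mapping.single m' (Poly_Mapping.lookup w m')))"
    by (subst pm_expand[of w]) (rule E_sum[OF s])
  also have "\<dots> = (\<Sum>m'\<in>Poly_Mapping.keys w. Poly_Mapping.single m' (Poly_Mapping.lookup w m' * d ^ length (word m')))"
    by (simp only: D_single[OF s g])
  finally have "Poly_Mapping.lookup (s w) m = (\<Sum>m'\<in>Poly_Mapping.keys w. (if m' = m then Poly_Mapping.lookup w m' * d ^ length (word m') else 0))"
    by (simp add: lookup_sum lookup_single when_def eq_commute)
  also have "\<dots> = d ^ length (word m) * Poly_Mapping.lookup w m"
    by (simp add: in_keys_iff)
  finally show ?thesis .
qed

lemma K_single_letter: "K y (Poly_Mapping.single (letter y') a) = (if y' = y then Poly_Mapping.single (letter y) a else 0)"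
proof -
  have "K y (Poly_Mapping.single (letter y') a) = cst a * K y (gen y')"
    unfolding gen_def by (rule E_single[OF K(1)])
  then show ?thesis using K(2)[of y y'] by (simp add: gen_def mult_single)
qed

lemma K_lookup:
  assumes l: "\<forall>m\<in>Poly_Mapping.keys w. \<exists>y. m = letter y"
  shows "Poly_Mapping.lookup (K y w) (letter y) = Poly_Mapping.lookup w (letter y)"
proof -
  have "K y w = (\<Sum>m\<in>Poly_Mapping.keys w. K y (Poly_Mapping.single m (Poly_Mapping.lookup w m)))"
    by (subst pm_expand[of w]) (rule E_sum[OF K(1)])
  then have "Poly_Mapping.lookup (K y w) (letter y) = (\<Sum>m\<in>Poly_Mapping.keys w. Poly_Mapping.lookup (K y (Poly_Mapping.single m (Poly_Mapping.lookup w m))) (letter y))"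
    by (simp add: lookup_sum)
  also have "\<dots> = (\<Sum>m\<in>Poly_Mapping.keys w. (if m = letter y then Poly_Mapping.lookup w m else 0))"
  proof (intro sum.cong refl)
    fix m assume "m \<in> Poly_Mapping.keys w"
    then obtain y' where m: "m = letter y'" using l by blast
    show "Poly_Mapping.lookup (K y (Poly_Mapping.single m (Poly_Mapping.lookup w m))) (letter y) = (if m = letter y then Poly_Mapping.lookup w m else 0)"
      using letter_inj by (auto simp: m K_single_letter lookup_single when_def inj_eq)
  qed
  also have "\<dots> = Poly_Mapping.lookup w (letter y)"
    by (simp add: in_keys_iff)
  finally show ?thesis .
qed

lemma pow_not_id:
  assumes "k \<noteq> 1"
  shows "\<exists>d::'a. d ^ k \<noteq> d"
proof (cases "k = 0")
  case True
  then show ?thesis by (intro exI[of _ 0]) simp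
next
  case False
  with assms have k: "k \<ge> 2" by simp
  let ?p = "monom (1::'a) k - [:0, 1:]"
  have "coeff ?p k = 1" using k by (simp add: coeff_monom coeff_pCons split: nat.splits)
  then have "?p \<noteq> 0" by (metis coeff_0 zero_neq_one)
  then have "finite {d. poly ?p d = 0}" by (rule poly_roots_finite)
  then obtain d where "poly ?p d \<noteq> 0" using inf
    by (metis (mono_tags, lifting) UNIV_eq_I mem_Collect_eq)
  then show ?thesis by (intro exI[of _ d]) (simp add: poly_monom)
qed

lemma two_gen:
  fixes x1 x2 :: 'x
  assumes x12: "x1 \<noteq> x2"
  shows "\<mu> (gen x1 + gen x2) = gen x1 + gen x2"
proof -
  define w where "w = \<mu> (gen x1 + gen x2)"
  have scal: "d ^ length (word m) * Poly_Mapping.lookup w m = d * Poly_Mapping.lookup w m" for d m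
  proof -
    obtain c where c: "sig c = d" using sig_surj by blast
    obtain s where s: "s \<in> EndW" "\<And>y. s (gen y) = cst c * gen y"
      using subst_ex[of "\<lambda>y. cst c * gen y"] by blast
    let ?c = "\<mu> \<circ> s \<circ> inv \<mu>"
    have cE: "?c \<in> EndW" by (rule conjE[OF s(1)])
    have cg: "?c (gen y) = cst d * gen y" for y
      by (simp only: conj_gen s(2) mu_smult mugen c)
    have "?c w = \<mu> (s (gen x1 + gen x2))" by (simp only: w_def conj_app)
    also have "\<dots> = cst d * w"
    proof -
      have "s (gen x1 + gen x2) = cst c * (gen x1 + gen x2)"
        by (simp only: E_add[OF s(1)] s(2) distrib_left)
      then show ?thesis by (simp only: mu_smult c w_def)
    qed
    finally have "?c w = cst d * w" .
    then show ?thesis using D_lookup[OF cE cg, of w m] by (auto simp: lookup_cst_mult)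
  qed
  have lett: "\<forall>m\<in>Poly_Mapping.keys w. \<exists>y. m = letter y"
  proof
    fix m assume "m \<in> Poly_Mapping.keys w"
    then have nz: "Poly_Mapping.lookup w m \<noteq> 0" by (simp add: in_keys_iff)
    have "length (word m) = 1"
    proof (rule ccontr)
      assume "length (word m) \<noteq> 1"
      then obtain d :: 'a where "d ^ length (word m) \<noteq> d" using pow_not_id by blast
      then show False using scal[of d m] nz by simp
    qed
    then obtain y where "word m = [y]" by (cases "word m") auto
    then have "m = letter y" using word[of m] by simp
    then show "\<exists>y. m = letter y" by blast
  qed
  have vals: "Poly_Mapping.lookup w (letter y) = Poly_Mapping.lookup (gen x1 + gen x2) (letter y)" for y
  proof -
    have "K y w = \<mu> (K y (gen x1 + gen x2))" by (simp only: w_def mu_K)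
    also have "\<dots> = K y (gen x1 + gen x2)"
    proof -
      have "K y (gen x1 + gen x2) = (if x1 = y then gen x1 else 0) + (if x2 = y then gen x2 else 0)"
        by (simp only: E_add[OF K(1)] K(2)) (auto)
      then show ?thesis using x12 by (cases "x1 = y"; cases "x2 = y") (simp_all add: mugen mu0)
    qed
    finally have "K y w = K y (gen x1 + gen x2)" .
    then have "Poly_Mapping.lookup w (letter y) = Poly_Mapping.lookup (K y (gen x1 + gen x2)) (letter y)"
      using K_lookup[OF lett] by metis
    also have "\<dots> = Poly_Mapping.lookup (gen x1 + gen x2) (letter y)"
    proof -
      have "K y (gen x1 + gen x2) = (if x1 = y then gen x1 else 0) + (if x2 = y then gen x2 else 0)"
        by (simp only: E_add[OF K(1)] K(2)) (auto)
      then show ?thesis using letter_inj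
        by (cases "x1 = y"; cases "x2 = y") (simp_all add: gen_def lookup_add lookup_single when_def inj_eq)
    qed
    finally show ?thesis .
  qed
  have "w = gen x1 + gen x2"
  proof (rule poly_mapping_eqI)
    fix m
    show "Poly_Mapping.lookup w m = Poly_Mapping.lookup (gen x1 + gen x2) m"
    proof (cases "\<exists>y. m = letter y")
      case True
      then show ?thesis using vals by auto
    next
      case False
      then have "m \<notin> Poly_Mapping.keys w" using lett by blast
      then show ?thesis using False by (auto simp: in_keys_iff gen_def lookup_add lookup_single when_def)
    qed
  qed
  then show ?thesis by (simp add: w_def)
qed

lemma mu_add_two:
  fixes x1 x2 :: 'x
  assumes x12: "x1 \<noteq> x2"
  shows "\<mu> (u + v) = \<mu> u + \<mu> v"
proof -
  obtain s where s: "s \<in> EndW" "\<And>y. s (gen y) = (if y = x1 then u else if y = x2 then v else 0)"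
    using subst_ex[of "\<lambda>y. if y = x1 then u else if y = x2 then v else 0"] by blast
  let ?c = "\<mu> \<circ> s \<circ> inv \<mu>"
  have cE: "?c \<in> EndW" by (rule conjE[OF s(1)])
  have "\<mu> (u + v) = \<mu> (s (gen x1 + gen x2))" using x12 by (simp add: E_add[OF s(1)] s(2))
  also have "\<dots> = ?c (\<mu> (gen x1 + gen x2))" by (rule conj_app[symmetric])
  also have "\<dots> = ?c (gen x1 + gen x2)" by (simp only: two_gen[OF x12])
  also have "\<dots> = \<mu> u + \<mu> v" using x12 by (simp only: E_add[OF cE] conj_gen s(2)) simp
  finally show ?thesis .
qed


lemma psi_smult: "psi x0 (smult a q) = smult (sig a) (psi x0 q)"
proof -
  have "phi x0 (psi x0 (smult a q)) = \<mu> (cst a * phi x0 q)" by (simp only: mu_phi[symmetric] phi_smult)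
  also have "\<dots> = phi x0 (smult (sig a) (psi x0 q))" by (simp only: mu_smult mu_phi phi_smult)
  finally show ?thesis by (rule phi_inj)
qed

lemma sig_add_one_var:
  fixes x0 :: 'x
  assumes one: "\<And>y. y = x0"
  shows "sig (a + b) = sig a + sig b"
proof -
  define f where "f b = psi x0 [:b,1:]" for b
  define \<alpha> where "\<alpha> b = coeff (f b) 1" for b
  have fdeg: "degree (f b) = 1" for b
  proof -
    have "pcompose [:b,1:] [:-b,1:] = [:0,1:]" by (simp add: pcompose_pCons)
    then have "pcompose (f b) (f (-b)) = [:0,1:]" unfolding f_def using psi_comp psi_X by metis
    then show ?thesis using degree_pcompose[of "f b" "f (-b)"] by simp
  qed
  have fform: "f b = [:sig b, \<alpha> b:]" for b
  proof -
    have e: "f b = [:coeff (f b) 0, coeff (f b) 1:]" by (rule degree1_eq[OF fdeg])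
    have "coeff (f b) 0 = poly (f b) (sig 0)" by (simp add: sig0 poly_0_coeff_0)
    also have "\<dots> = sig b" unfolding f_def using psi_eval[of "[:b,1:]" 0 x0] by simp
    finally show ?thesis using e by (simp add: \<alpha>_def)
  qed
  have scale: "\<alpha> (a * b) = \<alpha> b" if a: "a \<noteq> 0" for a b
  proof -
    have "smult a [:b,1:] = pcompose [:a*b,1:] [:0,a:]" by (simp add: pcompose_pCons)
    then have "smult (sig a) (f b) = pcompose (f (a*b)) [:0, sig a:]"
      unfolding f_def using psi_smult psi_comp psi_lin by metis
    then have "coeff (smult (sig a) (f b)) 1 = coeff (pcompose (f (a*b)) [:0, sig a:]) 1" by simp
    then have "sig a * \<alpha> b = \<alpha> (a*b) * sig a"
      by (simp add: fform pcompose_pCons)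
    moreover have "sig a \<noteq> 0" using a sig0 sig_inj by metis
    ultimately show ?thesis by simp
  qed
  have comm: "sig b + \<alpha> b * sig c = sig c + \<alpha> c * sig b" for b c
  proof -
    have "pcompose [:b,1:] [:c,1:] = pcompose [:c,1:] [:b,1:]" by (simp add: pcompose_pCons add.commute)
    then have "pcompose (f b) (f c) = pcompose (f c) (f b)" unfolding f_def using psi_comp by metis
    then have "coeff (pcompose (f b) (f c)) 0 = coeff (pcompose (f c) (f b)) 0" by simp
    then show ?thesis by (simp add: fform pcompose_pCons)
  qed
  obtain c :: 'a where c: "c \<noteq> 0" "c \<noteq> 1"
  proof -
    have "\<not> (UNIV :: 'a set) \<subseteq> {0, 1}" using inf finite_subset by auto
    then show ?thesis using that by blast
  qed
  have a1: "\<alpha> 1 = 1"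
  proof -
    have "sig 1 + \<alpha> 1 * sig c = sig c + \<alpha> c * sig 1" by (rule comm)
    moreover have "\<alpha> c = \<alpha> 1" using scale[of c 1] c by simp
    ultimately have "(\<alpha> 1 - 1) * (sig c - 1) = 0" using sig1 by (simp add: algebra_simps)
    moreover have "sig c \<noteq> 1" using c sig1 sig_inj by metis
    ultimately show ?thesis by simp
  qed
  show ?thesis
  proof (cases "b = 0")
    case True
    then show ?thesis by (simp add: sig0)
  next
    case False
    have "\<alpha> b = 1" using scale[of b 1] False a1 by simp
    then have "f b = [:sig b, 1:]" using fform by simp
    moreover have "sig (poly [:b,1:] a) = poly (f b) (sig a)" unfolding f_def by (rule psi_eval)
    ultimately show ?thesis by (simp add: add.commute)
  qed
qed

lemma map_poly_add_hom:
  assumes "f 0 = 0" "\<And>a b. f (a + b) = f a + f b"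
  shows "map_poly f (p + q) = map_poly f p + map_poly f q"
  by (rule poly_eqI) (simp add: coeff_map_poly assms)

lemma poly_hom:
  assumes z: "f 0 = 0" and ad: "\<And>a b. f (a + b) = f a + f b" and mu: "\<And>a b. f (a * b) = f a * f b"
  shows "f (poly q x) = poly (map_poly f q) (f x)"
  by (induction q) (simp_all add: map_poly_pCons z ad mu)

lemma mu_add_one:
  fixes x0 :: 'x
  assumes one: "\<And>y. y = x0"
  shows "\<mu> (u + v) = \<mu> u + \<mu> v"
proof -
  have sadd: "sig (a + b) = sig a + sig b" for a b by (rule sig_add_one_var[OF one])
  have psi_map: "psi x0 q = map_poly sig q" for q
  proof -
    let ?d = "psi x0 q - map_poly sig q"
    have "poly ?d (sig a) = 0" for a
      using psi_eval[of q a x0] poly_hom[of sig q a, OF sig0 sadd sig_mult] by simp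
    then have "poly ?d z = 0" for z using sig_surj by metis
    then have "?d = 0"
      using poly_roots_finite[of ?d] inf by auto
    then show ?thesis by simp
  qed
  have idE: "id \<in> EndW" by (simp add: EndW_def)
  have Kid: "K x0 = id"
    by (rule End_unique[OF K(1) idE]) (metis K(2) id_apply one)
  have all: "\<exists>q. p = phi x0 q" for p :: "'m \<Rightarrow>\<^sub>0 'a"
    using inphi_K[of x0 p] by (simp add: Kid inphi_def)
  obtain qu qv where u: "u = phi x0 qu" and v: "v = phi x0 qv" using all by metis
  have "\<mu> (u + v) = phi x0 (map_poly sig (qu + qv))" by (simp add: u v phi_add[symmetric] mu_phi psi_map)
  also have "\<dots> = \<mu> u + \<mu> v"
    by (simp add: u v mu_phi psi_map map_poly_add_hom[OF sig0 sadd] phi_add)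
  finally show ?thesis .
qed

theorem mu_add: "\<mu> (u + v) = \<mu> u + \<mu> v"
proof (cases "\<exists>x1 x2::'x. x1 \<noteq> x2")
  case True
  then show ?thesis using mu_add_two by blast
next
  case False
  then have "\<And>y. y = (undefined :: 'x)" by blast
  then show ?thesis by (rule mu_add_one)
qed

end


subsection \<open>Instance: multisets\<close>

lemma sum_list_singletons_mset: "sum_list (map (\<lambda>x. {#x#}) ws) = mset ws"
  by (induction ws) simp_all

interpretation fm: fa "(\<lambda>x. {#x#}) :: 'x \<Rightarrow> 'x multiset"
proof
  show "\<exists>ws. m = sum_list (map (\<lambda>x. {#x#}) ws)" for m :: "'x multiset"
    using ex_mset[of m] by (metis sum_list_singletons_mset)
  show "k = j" if "sum_list (replicate k {#x#}) = sum_list (replicate j {#x#})" for x :: 'x and k j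
  proof -
    have "sum_list (replicate n {#x#}) = replicate_mset n x" for n
      by (induction n) simp_all
    then show ?thesis using that arg_cong[of _ _ size] by (metis size_replicate_mset)
  qed
  show "inj (\<lambda>x::'x. {#x#})" by (simp add: inj_def)
qed

lemma fm_M: "fm.M f m = prod_mset (image_mset f m)"
proof -
  have "mset (fm.word m) = m" using fm.word[of m] by (simp add: sum_list_singletons_mset)
  then show ?thesis unfolding fm.M_def by (metis mset_map prod_mset_prod_list)
qed

lemma fm_subst: "\<exists>s\<in>EndW. \<forall>x. s (fm.gen x) = (f x :: 'x multiset \<Rightarrow>\<^sub>0 'a::field)"
proof
  show "fm.eval f \<in> EndW"
    by (rule fm.eval_End) (simp_all add: fm_M)
  show "\<forall>x. fm.eval f (fm.gen x) = f x"
    by (simp add: fm.gen_def fm.eval_single fm_M)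
qed

subsection \<open>Instance: lists\<close>

instantiation list :: (type) monoid_add
begin
definition zero_list_def: "0 = []"
definition plus_list_def: "xs + ys = xs @ ys"
instance by standard (simp_all add: zero_list_def plus_list_def)
end

lemma sum_list_singletons_list: "sum_list (map (\<lambda>x. [x]) ws) = ws"
  by (induction ws) (simp_all add: zero_list_def plus_list_def)

interpretation fl: fa "(\<lambda>x. [x]) :: 'x \<Rightarrow> 'x list"
proof
  show "\<exists>ws. m = sum_list (map (\<lambda>x. [x]) ws)" for m :: "'x list"
    by (metis sum_list_singletons_list)
  show "k = j" if "sum_list (replicate k [x]) = sum_list (replicate j [x])" for x :: 'x and k j
  proof -
    have "sum_list (replicate n [x]) = replicate n x" for n
      by (induction n) (simp_all add: zero_list_def plus_list_def)
    then show ?thesis using that by simp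
  qed
  show "inj (\<lambda>x::'x. [x])" by (simp add: inj_def)
qed

lemma fl_M: "fl.M f m = prod_list (map f m)"
proof -
  have "fl.word m = m" using fl.word[of m] by (simp add: sum_list_singletons_list)
  then show ?thesis unfolding fl.M_def by simp
qed

lemma fl_subst: "\<exists>s\<in>EndW. \<forall>x. s (fl.gen x) = (f x :: 'x list \<Rightarrow>\<^sub>0 'a::field)"
proof
  show "fl.eval f \<in> EndW"
    by (rule fl.eval_End) (simp_all add: fl_M plus_list_def zero_list_def)
  show "\<forall>x. fl.eval f (fl.gen x) = f x"
    by (simp add: fl.gen_def fl.eval_single fl_M)
qed

lemma app_eq_plus: "(@) = ((+) :: 'x list \<Rightarrow> _)"
  by (simp add: fun_eq_iff plus_list_def)

lemma nil_eq_zero: "[] = (0 :: 'x list)"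
  by (simp add: zero_list_def)

theorem lemma3p4:
  assumes "infinite (UNIV :: 'a::field set)"
  shows
  \<comment> \<open>free commutative algebra P[X]\<close>
  "(\<forall>\<mu> :: ('x::finite multiset \<Rightarrow>\<^sub>0 'a) \<Rightarrow> ('x multiset \<Rightarrow>\<^sub>0 'a).
      bij \<mu> \<and>
      bij_betw (\<lambda>s. \<mu> \<circ> s \<circ> inv \<mu>) (malg_End (+) {#}) (malg_End (+) {#}) \<and>
      \<mu> 0 = 0 \<and> \<mu> (malg_one {#}) = malg_one {#} \<and>
      (\<forall>x. \<mu> (malg_gen (\<lambda>y. {#y#}) x) = malg_gen (\<lambda>y. {#y#}) x)
      \<longrightarrow> (\<forall>u v. \<mu> (u + v) = \<mu> u + \<mu> v))
   \<and>
  \<comment> \<open>free associative algebra P<X>\<close>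
   (\<forall>\<mu> :: ('x::finite list \<Rightarrow>\<^sub>0 'a) \<Rightarrow> ('x list \<Rightarrow>\<^sub>0 'a).
      bij \<mu> \<and>
      bij_betw (\<lambda>s. \<mu> \<circ> s \<circ> inv \<mu>) (malg_End (@) []) (malg_End (@) []) \<and>
      \<mu> 0 = 0 \<and> \<mu> (malg_one []) = malg_one [] \<and>
      (\<forall>x. \<mu> (malg_gen (\<lambda>y. [y]) x) = malg_gen (\<lambda>y. [y]) x)
      \<longrightarrow> (\<forall>u v. \<mu> (u + v) = \<mu> u + \<mu> v))"
proof (intro conjI allI impI)
  fix \<mu> :: "('x::finite multiset \<Rightarrow>\<^sub>0 'a) \<Rightarrow> ('x multiset \<Rightarrow>\<^sub>0 'a)" and u v
  assume h: "bij \<mu> \<and>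
      bij_betw (\<lambda>s. \<mu> \<circ> s \<circ> inv \<mu>) (malg_End (+) {#}) (malg_End (+) {#}) \<and>
      \<mu> 0 = 0 \<and> \<mu> (malg_one {#}) = malg_one {#} \<and>
      (\<forall>x. \<mu> (malg_gen (\<lambda>y. {#y#}) x) = malg_gen (\<lambda>y. {#y#}) x)"
  have "mu (\<lambda>x. {#x#}) \<mu>"
  proof (intro mu.intro mu_axioms.intro)
    show "fa (\<lambda>x::'x. {#x#})" by (rule fm.fa_axioms)
    show "\<exists>s\<in>EndW. \<forall>x. s (fm.gen x) = f x" for f :: "'x \<Rightarrow> ('x multiset \<Rightarrow>\<^sub>0 'a)" by (rule fm_subst)
    show "infinite (UNIV :: 'a set)" by (rule assms)
    show "bij \<mu>" using h by blast
    show "\<mu> \<circ> s \<circ> inv \<mu> \<in> EndW" if "s \<in> EndW" for s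
      using h that malg_End_eq[where 'm = "'x multiset" and 'a = 'a] bij_betwE by fastforce
    show "\<mu> 0 = 0" using h by blast
    show "\<mu> 1 = 1" using h by (simp add: malg_one_def)
    show "\<mu> (fm.gen x) = fm.gen x" for x using h by (simp add: malg_gen_def fm.gen_def)
  qed
  then show "\<mu> (u + v) = \<mu> u + \<mu> v" by (rule mu.mu_add)
next
  fix \<mu> :: "('x::finite list \<Rightarrow>\<^sub>0 'a) \<Rightarrow> ('x list \<Rightarrow>\<^sub>0 'a)" and u v
  assume h: "bij \<mu> \<and>
      bij_betw (\<lambda>s. \<mu> \<circ> s \<circ> inv \<mu>) (malg_End (@) []) (malg_End (@) []) \<and>
      \<mu> 0 = 0 \<and> \<mu> (malg_one []) = malg_one [] \<and>
      (\<forall>x. \<mu> (malg_gen (\<lambda>y. [y]) x) = malg_gen (\<lambda>y. [y]) x)"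
  have E: "malg_End (@) [] = (EndW :: (('x list \<Rightarrow>\<^sub>0 'a) \<Rightarrow> _) set)"
    by (simp only: app_eq_plus nil_eq_zero malg_End_eq)
  have "mu (\<lambda>x. [x]) \<mu>"
  proof (intro mu.intro mu_axioms.intro)
    show "fa (\<lambda>x::'x. [x])" by (rule fl.fa_axioms)
    show "\<exists>s\<in>EndW. \<forall>x. s (fl.gen x) = f x" for f :: "'x \<Rightarrow> ('x list \<Rightarrow>\<^sub>0 'a)" by (rule fl_subst)
    show "infinite (UNIV :: 'a set)" by (rule assms)
    show "bij \<mu>" using h by blast
    show "\<mu> \<circ> s \<circ> inv \<mu> \<in> EndW" if "s \<in> EndW" for s
      using h that E bij_betwE by fastforce
    show "\<mu> 0 = 0" using h by blast
    show "\<mu> 1 = 1" using h by (simp add: malg_one_def nil_eq_zero)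
    show "\<mu> (fl.gen x) = fl.gen x" for x using h by (simp add: malg_gen_def fl.gen_def)
  qed
  then show "\<mu> (u + v) = \<mu> u + \<mu> v" by (rule mu.mu_add)
qed

end
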